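(* Let $R,S,T\in\mathcal{L}$ with $R\le_\ell T$ and let $\epsilon\ge0$. If there exist nonzero morphisms $k_R\to k_S(\epsilon)$ and $k_S\to k_T(\epsilon)$, then $k_S$ is $\Lambda_\epsilon$-interleaved with $k_R$ or with $k_T$.
   Context: Let $k$ be a field. The bipath poset $B$ has underlying set $(\mathbb{R}\times\{1,2\})\sqcup\{-\infty,+\infty\}$. Its order is: $x\le y$ iff $x=-\infty$, or $y=+\infty$, or $x=(s,i)$, $y=(t,i)$ with the same $i$ and $s\le t$. An interval is a nonempty convex and connected subset. $k_I$ is the interval module (functor $B\to$ $k$-vector spaces, $k$ on $I$ and $0$ elsewhere, identity maps within $I$, zero maps otherwise). For $\epsilon\ge0$, $\Lambda_\epsilon$ sends $(r,i)\mapsto(r+\epsilon,i)$ and fixes $\pm\infty$. Then: - $V(\epsilon)_b=V_{\Lambda_\epsilon b}$ and $V(\epsilon)(b,b')=V(\Lambda_\epsilon b,\Lambda_\epsilon b')$; $\phi(\epsilon)$ has components $\phi_{\Lambda_\epsilon b}$; - $V_{0\to\epsilon}$ has components $V(b,\Lambda_\epsilon b)$; - $V,W$ are $\Lambda_\epsilon$-interleaved if there are $\alpha\colon V\to W(\epsilon)$, $\beta\colon W\to V(\epsilon)$ with $\beta(\epsilon)\alpha=V_{0\to2\epsilon}$ and $\alpha(\epsilon)\beta=W_{0\to2\epsilon}$. Decorated numbers: $\overline{\mathbb{R}}^*=\{r^+,r^-: r\in\mathbb{R}\cup\{\pm\infty\}\}$ with total order $s^\sigma\le_* t^\tau$ iff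 $s<t$, or $s=t$ and $(\sigma,\tau)\in\{(-,-),(-,+),(+,+)\}$. Let $\mathbb{R}^*=\{r^\pm:r\in\mathbb{R}\}$. For $s^\sigma,t^\tau\in\mathbb{R}^*$, $s^\sigma+t^\tau$ is $(s+t)^+$ if $\sigma=\tau=+$ and $(s+t)^-$ otherwise. $\mathcal{L}$ is the set of intervals $\neq B$ containing $-\infty$. Each is uniquely $$\langle s^\sigma,t^\tau\rangle_{\mathcal{L}}=\{-\infty\}\cup\{(r,1):r^+\le_* t^\tau\}\cup\{(r,2):r^+\le_* s^\sigma\}$$ with $s^\sigma,t^\tau\in\mathbb{R}^*\cup\{-\infty^+,+\infty^-\}$. Partition of $\mathcal{L}$: - $\mathcal{L}_1$: both entries $-\infty^+$; - $\mathcal{L}_2$: exactly one entry $-\infty^+$, the other in $\mathbb{R}^*\cup\{+\infty^-\}$; - $\mathcal{L}_3$: both entries in $\mathbb{R}^*$; - $\mathcal{L}_4$: exactly one entry $+\infty^-$, the other in $\mathbb{R}^*$; - $\mathcal{L}_5$: both entries $+\infty^-$. Define $\ell$ by $\ell=-\infty^-$ on $\mathcal{L}_1$, $\max\{s^\sigma,t^\tau\}$ on $\mathcal{L}_2$, $s^\sigma+t^\tau$ on $\mathcal{L}_3$, $\min\{s^\sigma,t^\tau\}$ on $\mathcal{L}_4$, and $+\infty^-$ on $\mathcal{L}_5$. Set $I\le_\ell J$ iff either $I\in\mathcal{L}_i$, $J\in\mathcal{L}_j$ with $i<j$, or $I,J$ lie in the same $\mathcal{L}_i$ and $\ell(I)\le_*\ell(J)$.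 *)

theory Defs
  imports Complex_Main
begin

datatype branch = Br1 | Br2

datatype bp = NInf | Pt real branch | PInf

definition bp_le :: "bp \<Rightarrow> bp \<Rightarrow> bool" where
  "bp_le x y \<longleftrightarrow> x = NInf \<or> y = PInf \<or>
     (\<exists>s t i. x = Pt s i \<and> y = Pt t i \<and> s \<le> t)"

definition is_interval :: "bp set \<Rightarrow> bool" where
  "is_interval I \<longleftrightarrow> I \<noteq> {} \<and>
     (\<forall>x\<in>I. \<forall>y. \<forall>z\<in>I. bp_le x y \<and> bp_le y z \<longrightarrow> y \<in> I) \<and>
     (\<forall>x\<in>I. \<forall>y\<in>I.
        (\<lambda>a b. a \<in> I \<and> b \<in> I \<and> (bp_le a b \<or> bp_le b a))\<^sup>*\<^sup>* x y)"

fun shift :: "real \<Rightarrow> bp \<Rightarrow> bp" where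
  "shift e (Pt r i) = Pt (r + e) i"
| "shift e NInf = NInf"
| "shift e PInf = PInf"

text \<open>A module is given by its spaces V_b (subspaces of the field k, i.e. 0 or k)
  and its structure maps V(b,b') (only relevant for b \<le> b').\<close>
type_synonym 'k pmod = "(bp \<Rightarrow> 'k set) \<times> (bp \<Rightarrow> bp \<Rightarrow> 'k \<Rightarrow> 'k)"

definition sp :: "'k pmod \<Rightarrow> bp \<Rightarrow> 'k set" where "sp V = fst V"
definition mp :: "'k pmod \<Rightarrow> bp \<Rightarrow> bp \<Rightarrow> 'k \<Rightarrow> 'k" where "mp V = snd V"

definition imod :: "bp set \<Rightarrow> 'k::field pmod" where
  "imod I = ((\<lambda>b. if b \<in> I then UNIV else {0}),
             (\<lambda>b b'. if b \<in> I \<and> b' \<in> I then id else (\<lambda>_. 0)))"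

definition shiftmod :: "real \<Rightarrow> 'k pmod \<Rightarrow> 'k pmod" where
  "shiftmod e V = ((\<lambda>b. sp V (shift e b)), (\<lambda>b b'. mp V (shift e b) (shift e b')))"

definition is_mor :: "'k::field pmod \<Rightarrow> 'k pmod \<Rightarrow> (bp \<Rightarrow> 'k \<Rightarrow> 'k) \<Rightarrow> bool" where
  "is_mor V W \<phi> \<longleftrightarrow>
     (\<forall>b. (\<forall>x\<in>sp V b. \<phi> b x \<in> sp W b) \<and>
          (\<forall>x\<in>sp V b. \<forall>y\<in>sp V b. \<phi> b (x + y) = \<phi> b x + \<phi> b y) \<and>
          (\<forall>a. \<forall>x\<in>sp V b. \<phi> b (a * x) = a * \<phi> b x)) \<and>
     (\<forall>b b'. bp_le b b' \<longrightarrow> (\<forall>x\<in>sp V b. \<phi> b' (mp V b b' x) = mp W b b' (\<phi> b x)))"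

definition nonzero_mor :: "'k::field pmod \<Rightarrow> (bp \<Rightarrow> 'k \<Rightarrow> 'k) \<Rightarrow> bool" where
  "nonzero_mor V \<phi> \<longleftrightarrow> (\<exists>b. \<exists>x\<in>sp V b. \<phi> b x \<noteq> 0)"

definition interleaved :: "real \<Rightarrow> 'k::field pmod \<Rightarrow> 'k pmod \<Rightarrow> bool" where
  "interleaved e V W \<longleftrightarrow> (\<exists>\<alpha> \<beta>.
     is_mor V (shiftmod e W) \<alpha> \<and> is_mor W (shiftmod e V) \<beta> \<and>
     (\<forall>b. \<forall>x\<in>sp V b. \<beta> (shift e b) (\<alpha> b x) = mp V b (shift (2 * e) b) x) \<and>
     (\<forall>b. \<forall>x\<in>sp W b. \<alpha> (shift e b) (\<beta> b x) = mp W b (shift (2 * e) b) x))"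

datatype ext = NegInfE | Fin real | PosInfE

fun ext_less :: "ext \<Rightarrow> ext \<Rightarrow> bool" where
  "ext_less NegInfE NegInfE = False"
| "ext_less NegInfE _ = True"
| "ext_less (Fin a) NegInfE = False"
| "ext_less (Fin a) (Fin b) = (a < b)"
| "ext_less (Fin a) PosInfE = True"
| "ext_less PosInfE _ = False"

text \<open>Decorated number r^\<sigma>: pair (r, \<sigma>) with True = +, False = -.\<close>
type_synonym dec = "ext \<times> bool"

definition dle :: "dec \<Rightarrow> dec \<Rightarrow> bool" where
  "dle x y \<longleftrightarrow> ext_less (fst x) (fst y) \<or> (fst x = fst y \<and> (snd x \<longrightarrow> snd y))"

definition dmax :: "dec \<Rightarrow> dec \<Rightarrow> dec" where "dmax x y = (if dle x y then y else x)"
definition dmin :: "dec \<Rightarrow> dec \<Rightarrow> dec" where "dmin x y = (if dle x y then x else y)"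

definition is_fin :: "dec \<Rightarrow> bool" where "is_fin x \<longleftrightarrow> (\<exists>r. fst x = Fin r)"

definition fval :: "dec \<Rightarrow> real" where "fval x = (case fst x of Fin r \<Rightarrow> r | _ \<Rightarrow> 0)"

definition dadd :: "dec \<Rightarrow> dec \<Rightarrow> dec" where
  "dadd x y = (Fin (fval x + fval y), snd x \<and> snd y)"

abbreviation mInfP :: dec where "mInfP \<equiv> (NegInfE, True)"
abbreviation mInfM :: dec where "mInfM \<equiv> (NegInfE, False)"
abbreviation pInfM :: dec where "pInfM \<equiv> (PosInfE, False)"

definition valid_entry :: "dec \<Rightarrow> bool" where
  "valid_entry x \<longleftrightarrow> is_fin x \<or> x = mInfP \<or> x = pInfM"

definition Lset :: "dec \<Rightarrow> dec \<Rightarrow> bp set" where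
  "Lset s t = {NInf} \<union> {Pt r Br1 | r. dle (Fin r, True) t}
                     \<union> {Pt r Br2 | r. dle (Fin r, True) s}"

definition Lfam :: "bp set set" where
  "Lfam = {I. is_interval I \<and> I \<noteq> UNIV \<and> NInf \<in> I}"

definition Lparams :: "bp set \<Rightarrow> dec \<times> dec" where
  "Lparams I = (THE p. valid_entry (fst p) \<and> valid_entry (snd p) \<and> I = Lset (fst p) (snd p))"

definition Lclass_p :: "dec \<Rightarrow> dec \<Rightarrow> nat" where
  "Lclass_p s t =
     (if s = mInfP \<and> t = mInfP then 1
      else if (s = mInfP \<and> (is_fin t \<or> t = pInfM)) \<or> (t = mInfP \<and> (is_fin s \<or> s = pInfM)) then 2
      else if is_fin s \<and> is_fin t then 3
      else if (s = pInfM \<and> is_fin t) \<or> (t = pInfM \<and> is_fin s) then 4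
      else 5)"

definition ell_p :: "dec \<Rightarrow> dec \<Rightarrow> dec" where
  "ell_p s t =
     (if Lclass_p s t = 1 then mInfM
      else if Lclass_p s t = 2 then dmax s t
      else if Lclass_p s t = 3 then dadd s t
      else if Lclass_p s t = 4 then dmin s t
      else pInfM)"

definition Lclass :: "bp set \<Rightarrow> nat" where
  "Lclass I = Lclass_p (fst (Lparams I)) (snd (Lparams I))"

definition ell :: "bp set \<Rightarrow> dec" where
  "ell I = ell_p (fst (Lparams I)) (snd (Lparams I))"

definition le_ell :: "bp set \<Rightarrow> bp set \<Rightarrow> bool" where
  "le_ell I J \<longleftrightarrow> Lclass I < Lclass J \<or> (Lclass I = Lclass J \<and> dle (ell I) (ell J))"

end

theory Submission
  imports Defs
begin


definition inD :: "real \<Rightarrow> dec \<Rightarrow> bool" where "inD x d \<longleftrightarrow> dle (Fin x, True) d"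
definition shle :: "real \<Rightarrow> dec \<Rightarrow> dec \<Rightarrow> bool" where
  "shle e d a \<longleftrightarrow> (\<forall>x. inD (x + e) d \<longrightarrow> inD x a)"

lemma ext_less_trans: "ext_less a b \<Longrightarrow> ext_less b c \<Longrightarrow> ext_less a c"
  by (cases a; cases b; cases c) auto

lemma ext_less_irrefl: "\<not> ext_less a a"
  by (cases a) auto

lemma ext_less_total: "ext_less a b \<or> a = b \<or> ext_less b a"
  by (cases a; cases b) auto

lemma ext_less_asym: "ext_less a b \<Longrightarrow> \<not> ext_less b a"
  by (cases a; cases b) auto

lemma dle_trans: "dle x y \<Longrightarrow> dle y z \<Longrightarrow> dle x z"
  unfolding dle_def by (auto dest: ext_less_trans)

lemma valid_cases:
  assumes "valid_entry d"
  obtains "d = mInfP" | "d = pInfM" | a s where "d = (Fin a, s)"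
  using assms unfolding valid_entry_def is_fin_def by (cases d) auto

lemma inD_fin[simp]: "inD x (Fin a, s) \<longleftrightarrow> x < a \<or> (x = a \<and> s)"
  by (auto simp: inD_def dle_def)
lemma inD_neg[simp]: "\<not> inD x (NegInfE, s)"
  by (auto simp: inD_def dle_def)
lemma inD_pos[simp]: "inD x (PosInfE, s)"
  by (auto simp: inD_def dle_def)

lemma inD_mono: "inD y d \<Longrightarrow> x \<le> y \<Longrightarrow> inD x d"
  unfolding inD_def dle_def by (cases "fst d") auto

lemma inD_dle: "inD x d \<Longrightarrow> dle d d' \<Longrightarrow> inD x d'"
  unfolding inD_def by (rule dle_trans)

lemma shle_refl: "e \<ge> 0 \<Longrightarrow> shle e d d"
  unfolding shle_def by (auto elim: inD_mono)

lemma shle_to_mInf: "shle e d mInfP \<Longrightarrow> valid_entry d \<Longrightarrow> d = mInfP"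
  unfolding shle_def
proof (erule valid_cases)
  fix a s assume h: "\<forall>x. inD (x + e) d \<longrightarrow> inD x mInfP" and d: "d = (Fin a, s)"
  have "inD ((a - 1 - e) + e) d" using d by simp
  then have "inD (a - 1 - e) mInfP" using h by blast
  then show ?thesis by simp
qed (auto)

lemma shle_from_pInf: "shle e pInfM d \<Longrightarrow> valid_entry d \<Longrightarrow> d = pInfM"
  unfolding shle_def
proof (erule valid_cases)
  fix a s assume h: "\<forall>x. inD (x + e) pInfM \<longrightarrow> inD x d" and "d = (Fin a, s)"
  have "inD ((a + 1) + e) pInfM" by simp
  then have "inD (a + 1) d" using h by blast
  then have "a + 1 < a \<or> (a + 1 = a \<and> s)" using \<open>d = (Fin a, s)\<close> by simp
  then show ?thesis by simp
qed (auto)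

lemma shle_fin: "shle e (Fin a, s) (Fin b, t) \<longleftrightarrow> a - e < b \<or> (a - e = b \<and> (s \<longrightarrow> t))"
proof
  assume h: "shle e (Fin a, s) (Fin b, t)"
  show "a - e < b \<or> (a - e = b \<and> (s \<longrightarrow> t))"
  proof (rule ccontr)
    assume n: "\<not> ?thesis"
    show False
    proof (cases "b < a - e")
      case True
      define x where "x = (b + (a - e)) / 2"
      have "x + e < a" using True by (simp add: x_def field_simps)
      then have "inD (x + e) (Fin a, s)" by simp
      with h have "inD x (Fin b, t)" unfolding shle_def by blast
      then show False using True by (simp add: x_def)
    next
      case False
      with n have "a - e = b" "s" "\<not> t" by auto
      then have "inD (b + e) (Fin a, s)" by simp
      with h have "inD b (Fin b, t)" unfolding shle_def by blast
      then show False using \<open>\<not> t\<close> by simp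
    qed
  qed
next
  assume "a - e < b \<or> (a - e = b \<and> (s \<longrightarrow> t))"
  then show "shle e (Fin a, s) (Fin b, t)" unfolding shle_def by auto
qed

lemma oneD:
  assumes "e \<ge> 0" "dle r t"
  shows "shle e r s \<or> shle e s t"
proof (rule ccontr)
  assume "\<not> ?thesis"
  then obtain x y where x: "inD (x + e) r" "\<not> inD x s" and y: "inD (y + e) s" "\<not> inD y t"
    unfolding shle_def by blast
  have "y + e < x" using x(2) y(1) inD_mono linorder_not_less by blast
  then have "y \<le> x + e" using assms(1) by linarith
  then have "inD y r" using x(1) inD_mono by blast
  then have "inD y t" using assms(2) inD_dle by blast
  then show False using y(2) by blast
qed



lemma Lset_NInf[simp]: "NInf \<in> Lset s t" by (simp add: Lset_def)
lemma Lset_PInf[simp]: "PInf \<notin> Lset s t" by (simp add: Lset_def)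
lemma Lset_Pt1[simp]: "Pt x Br1 \<in> Lset s t \<longleftrightarrow> inD x t" by (simp add: Lset_def inD_def)
lemma Lset_Pt2[simp]: "Pt x Br2 \<in> Lset s t \<longleftrightarrow> inD x s" by (simp add: Lset_def inD_def)

lemma D_eq:
  assumes "valid_entry d" "valid_entry d'" "\<And>x. inD x d \<longleftrightarrow> inD x d'"
  shows "d = d'"
proof -
  have A: "inD x d \<Longrightarrow> inD x d'" "inD x d' \<Longrightarrow> inD x d" for x using assms(3) by auto
  show ?thesis
  proof (rule valid_cases[OF assms(1)]; rule valid_cases[OF assms(2)])
    fix a s b t assume d: "d = (Fin a, s)" and d': "d' = (Fin b, t)"
    have "\<not> a < b"
    proof
      assume "a < b" then have "inD ((a+b)/2) d'" using d' by (simp add: field_simps)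
      then have "inD ((a+b)/2) d" by (rule A)
      then show False using d \<open>a < b\<close> by (simp add: field_simps)
    qed
    moreover have "\<not> b < a"
    proof
      assume "b < a" then have "inD ((a+b)/2) d" using d by (simp add: field_simps)
      then have "inD ((a+b)/2) d'" by (rule A)
      then show False using d' \<open>b < a\<close> by (simp add: field_simps)
    qed
    ultimately have ab: "a = b" by simp
    have "s = t" using A[of a] d d' ab by auto
    then show ?thesis using d d' ab by simp
  next
    fix a s assume "d = (Fin a, s)" "d' = mInfP" then show ?thesis using A[of "a - 1"] by simp
  next
    fix a s assume "d = (Fin a, s)" "d' = pInfM" then show ?thesis using A[of "a + 1"] by simp
  next
    fix a s assume "d' = (Fin a, s)" "d = mInfP" then show ?thesis using A[of "a - 1"] by simp
  next
    fix a s assume "d' = (Fin a, s)" "d = pInfM" then show ?thesis using A[of "a + 1"] by simp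
  qed (use A[of 0] in auto)
qed

lemma Lset_inj:
  assumes "valid_entry s" "valid_entry t" "valid_entry s'" "valid_entry t'"
    "Lset s t = Lset s' t'"
  shows "s = s' \<and> t = t'"
proof
  show "s = s'" using assms(5) by (intro D_eq assms) (metis Lset_Pt2)
  show "t = t'" using assms(5) by (intro D_eq assms) (metis Lset_Pt1)
qed

lemma Lparams_eq:
  assumes "valid_entry s" "valid_entry t"
  shows "Lparams (Lset s t) = (s, t)"
  unfolding Lparams_def
  by (rule the_equality) (use assms Lset_inj in fastforce)+

definition mkdec :: "real set \<Rightarrow> dec" where
  "mkdec A = (if A = {} then mInfP else if A = UNIV then pInfM else (Fin (Sup A), Sup A \<in> A))"

lemma mkdec:
  assumes down: "\<And>x y. y \<in> A \<Longrightarrow> x \<le> y \<Longrightarrow> x \<in> A"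
  shows "valid_entry (mkdec A) \<and> (\<forall>x. inD x (mkdec A) \<longleftrightarrow> x \<in> A)"
proof (cases "A = {} \<or> A = UNIV")
  case True then show ?thesis by (auto simp: mkdec_def valid_entry_def)
next
  case False
  then obtain z y where z: "z \<notin> A" and y: "y \<in> A" by auto
  have lt: "w < z" if "w \<in> A" for w using down[of w z] z that by (meson not_le)
  have bdd: "bdd_above A" using lt by (meson bdd_aboveI less_imp_le)
  have m: "mkdec A = (Fin (Sup A), Sup A \<in> A)" using False by (simp add: mkdec_def)
  have "inD x (mkdec A) \<longleftrightarrow> x \<in> A" for x
  proof
    assume "inD x (mkdec A)"
    then have "x < Sup A \<or> (x = Sup A \<and> Sup A \<in> A)" using m by simp
    then show "x \<in> A"
    proof
      assume "x < Sup A"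
      then obtain w where "w \<in> A" "x < w" using less_cSup_iff[of A x] y bdd by auto
      then show ?thesis using down by auto
    qed auto
  next
    assume "x \<in> A"
    then have "x \<le> Sup A" using bdd by (simp add: cSup_upper)
    then show "inD x (mkdec A)" using m \<open>x \<in> A\<close> by auto
  qed
  then show ?thesis using m by (simp add: valid_entry_def is_fin_def)
qed

lemma Lfam_down:
  assumes "I \<in> Lfam" "bp_le c c'" "c' \<in> I"
  shows "c \<in> I"
proof -
  have "is_interval I" "NInf \<in> I" using assms(1) by (auto simp: Lfam_def)
  then have "\<forall>y. \<forall>z\<in>I. bp_le NInf y \<and> bp_le y z \<longrightarrow> y \<in> I" unfolding is_interval_def by blast
  moreover have "bp_le NInf c" by (simp add: bp_le_def)
  ultimately show ?thesis using assms(2,3) by blast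
qed

lemma Lfam_PInf: assumes "I \<in> Lfam" shows "PInf \<notin> I"
proof
  assume "PInf \<in> I"
  then have "c \<in> I" for c using Lfam_down[OF assms, of c PInf] by (simp add: bp_le_def)
  then show False using assms by (auto simp: Lfam_def)
qed

lemma Lfam_repr:
  assumes "I \<in> Lfam"
  shows "\<exists>s t. valid_entry s \<and> valid_entry t \<and> I = Lset s t"
proof -
  define A1 where "A1 = {r. Pt r Br1 \<in> I}"
  define A2 where "A2 = {r. Pt r Br2 \<in> I}"
  have d: "Pt x i \<in> I" if "Pt y i \<in> I" "x \<le> y" for x y i
    using Lfam_down[OF assms, of "Pt x i" "Pt y i"] that by (simp add: bp_le_def)
  have m1: "valid_entry (mkdec A1) \<and> (\<forall>x. inD x (mkdec A1) \<longleftrightarrow> x \<in> A1)"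
    by (rule mkdec) (use d in \<open>auto simp: A1_def\<close>)
  have m2: "valid_entry (mkdec A2) \<and> (\<forall>x. inD x (mkdec A2) \<longleftrightarrow> x \<in> A2)"
    by (rule mkdec) (use d in \<open>auto simp: A2_def\<close>)
  have "I = Lset (mkdec A2) (mkdec A1)"
  proof
    show "I \<subseteq> Lset (mkdec A2) (mkdec A1)"
    proof
      fix c assume c: "c \<in> I" then show "c \<in> Lset (mkdec A2) (mkdec A1)"
      proof (cases c)
        case (Pt x i) then show ?thesis using m1 m2 c by (cases i) (auto simp: A1_def A2_def)
      qed (use Lfam_PInf[OF assms] in auto)
    qed
    show "Lset (mkdec A2) (mkdec A1) \<subseteq> I"
    proof
      fix c assume c: "c \<in> Lset (mkdec A2) (mkdec A1)" then show "c \<in> I"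
      proof (cases c)
        case (Pt x i) then show ?thesis using m1 m2 c by (cases i) (auto simp: A1_def A2_def)
      qed (use assms in \<open>auto simp: Lfam_def\<close>)
    qed
  qed
  then show ?thesis using m1 m2 by blast
qed



lemma sp_imod[simp]: "sp (imod I :: 'k::field pmod) b = (if b \<in> I then UNIV else {0})"
  by (simp add: sp_def imod_def)
lemma mp_imod[simp]: "mp (imod I :: 'k::field pmod) b b' = (if b \<in> I \<and> b' \<in> I then id else (\<lambda>_. 0))"
  by (simp add: mp_def imod_def)
lemma sp_shiftmod[simp]: "sp (shiftmod e V) b = sp V (shift e b)"
  by (simp add: sp_def shiftmod_def)
lemma mp_shiftmod[simp]: "mp (shiftmod e V) b b' = mp V (shift e b) (shift e b')"
  by (simp add: mp_def shiftmod_def)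

lemma shift_NInf_le[simp]: "bp_le NInf c" by (simp add: bp_le_def)

lemma mor_incl:
  fixes \<phi> :: "bp \<Rightarrow> 'k::field \<Rightarrow> 'k"
  assumes mor: "is_mor (imod I :: 'k pmod) (shiftmod e (imod J)) \<phi>"
    and nz: "nonzero_mor (imod I :: 'k pmod) \<phi>"
    and NI: "NInf \<in> I" and J: "NInf \<in> J" and sb: "shift e b \<in> J"
  shows "b \<in> I"
proof (rule ccontr)
  assume bI: "b \<notin> I"
  have lin: "\<phi> c (a * x) = a * \<phi> c x" if "x \<in> sp (imod I :: 'k pmod) c" for a x c
    using mor that unfolding is_mor_def by blast
  have nat: "\<phi> c' (mp (imod I :: 'k pmod) c c' x) = mp (shiftmod e (imod J) :: 'k pmod) c c' (\<phi> c x)"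
    if "bp_le c c'" "x \<in> sp (imod I :: 'k pmod) c" for c c' x
    using mor that unfolding is_mor_def by blast
  have z: "\<phi> c 0 = 0" if "0 \<in> sp (imod I :: 'k pmod) c" for c
    using lin[OF that, of 0] by simp
  obtain c x where x: "x \<in> sp (imod I :: 'k pmod) c" "\<phi> c x \<noteq> 0"
    using nz unfolding nonzero_mor_def by blast
  have cI: "c \<in> I"
  proof (rule ccontr)
    assume "c \<notin> I"
    then have "x = 0" "0 \<in> sp (imod I :: 'k pmod) c" using x(1) by auto
    then show False using z x(2) by auto
  qed
  have 1: "\<phi> c x = (if NInf \<in> J \<and> shift e c \<in> J then \<phi> NInf x else 0)"
    using nat[of NInf c x] x(1) cI NI by simp
  have 2: "\<phi> NInf x \<noteq> 0" using 1 x(2) by (auto split: if_splits)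
  have 3: "\<phi> b 0 = (if NInf \<in> J \<and> shift e b \<in> J then \<phi> NInf x else 0)"
    using nat[of NInf b x] bI NI by simp
  have "\<phi> b 0 = 0" using z[of b] bI by simp
  then show False using 2 3 J sb by simp
qed

lemma shift_mono: "bp_le b b' \<Longrightarrow> bp_le (shift e b) (shift e b')"
  by (auto simp: bp_le_def)

lemma shift_shift: "shift e (shift e b) = shift (2 * e) b"
  by (cases b) auto

lemma mor_build:
  assumes J: "J \<in> Lfam" and H: "\<And>b. shift e b \<in> J \<Longrightarrow> b \<in> I"
  shows "is_mor (imod I :: 'k::field pmod) (shiftmod e (imod J))
           (\<lambda>b x. if b \<in> I \<and> shift e b \<in> J then x else 0)"
  unfolding is_mor_def
proof (intro conjI allI impI ballI)
  fix b b' :: bp and x :: 'k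
  assume le: "bp_le b b'" and x: "x \<in> sp (imod I :: 'k pmod) b"
  have d: "shift e b' \<in> J \<Longrightarrow> shift e b \<in> J" using Lfam_down[OF J shift_mono[OF le]] .
  show "(if b' \<in> I \<and> shift e b' \<in> J then mp (imod I :: 'k pmod) b b' x else 0) =
       mp (shiftmod e (imod J) :: 'k pmod) b b' (if b \<in> I \<and> shift e b \<in> J then x else 0)"
    using x d H[of b'] by auto
qed (auto)

lemma interleave_build:
  assumes I: "I \<in> Lfam" and J: "J \<in> Lfam"
    and H1: "\<And>b. shift e b \<in> J \<Longrightarrow> b \<in> I" and H2: "\<And>b. shift e b \<in> I \<Longrightarrow> b \<in> J"
  shows "interleaved e (imod I :: 'k::field pmod) (imod J)"
  unfolding interleaved_def
proof (intro exI conjI)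
  show "is_mor (imod I :: 'k::field pmod) (shiftmod e (imod J))
           (\<lambda>b x. if b \<in> I \<and> shift e b \<in> J then x else 0)" by (rule mor_build[OF J H1])
  show "is_mor (imod J :: 'k::field pmod) (shiftmod e (imod I))
           (\<lambda>b x. if b \<in> J \<and> shift e b \<in> I then x else 0)" by (rule mor_build[OF I H2])
  show "\<forall>b. \<forall>x\<in>sp (imod I :: 'k pmod) b.
       (if shift e b \<in> J \<and> shift e (shift e b) \<in> I then if b \<in> I \<and> shift e b \<in> J then x else 0 else 0) =
       mp (imod I) b (shift (2 * e) b) x"
    using H1 H2 by (auto simp: shift_shift[symmetric])
  show "\<forall>b. \<forall>x\<in>sp (imod J :: 'k pmod) b.
       (if shift e b \<in> I \<and> shift e (shift e b) \<in> J then if b \<in> J \<and> shift e b \<in> I then x else 0 else 0) =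
       mp (imod J) b (shift (2 * e) b) x"
    using H1 H2 by (auto simp: shift_shift[symmetric])
qed



lemma core3:
  assumes "e \<ge> 0"
    "shle e (Fin s1, a1) (Fin r1, b1)" "shle e (Fin s2, a2) (Fin r2, b2)"
    "shle e (Fin t1, c1) (Fin s1, a1)" "shle e (Fin t2, c2) (Fin s2, a2)"
    "dle (dadd (Fin r2, b2) (Fin r1, b1)) (dadd (Fin t2, c2) (Fin t1, c1))"
  shows "(shle e (Fin r1, b1) (Fin s1, a1) \<and> shle e (Fin r2, b2) (Fin s2, a2)) \<or>
         (shle e (Fin s1, a1) (Fin t1, c1) \<and> shle e (Fin s2, a2) (Fin t2, c2))"
  using assms unfolding shle_fin dle_def dadd_def fval_def by simp smt

lemma cls_m: "valid_entry x \<Longrightarrow> x \<noteq> mInfP \<Longrightarrow>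
   Lclass_p x mInfP = 2 \<and> Lclass_p mInfP x = 2 \<and> ell_p x mInfP = x \<and> ell_p mInfP x = x"
  by (erule valid_cases) (auto simp: Lclass_p_def ell_p_def dmax_def dle_def is_fin_def)

lemma cls_mm: "Lclass_p mInfP mInfP = 1"
  by (auto simp: Lclass_p_def)

lemma cls_p: "x = (Fin a, s) \<Longrightarrow>
   Lclass_p x pInfM = 4 \<and> Lclass_p pInfM x = 4 \<and> ell_p x pInfM = x \<and> ell_p pInfM x = x"
  by (auto simp: Lclass_p_def ell_p_def dmin_def dle_def is_fin_def)

lemma cls_pp: "Lclass_p pInfM pInfM = 5"
  by (auto simp: Lclass_p_def is_fin_def)

lemma cls_f: "x = (Fin a, s) \<Longrightarrow> y = (Fin b, t) \<Longrightarrow> Lclass_p x y = 3 \<and> ell_p x y = dadd x y"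
  by (auto simp: Lclass_p_def ell_p_def is_fin_def)

lemma cls_ge3: "valid_entry x \<Longrightarrow> valid_entry y \<Longrightarrow> x \<noteq> mInfP \<Longrightarrow> y \<noteq> mInfP \<Longrightarrow> Lclass_p x y \<ge> 3"
  by (erule valid_cases; erule valid_cases) (auto simp: Lclass_p_def is_fin_def)

lemma cls_ge4: "valid_entry x \<Longrightarrow> valid_entry y \<Longrightarrow> x \<noteq> mInfP \<Longrightarrow> y \<noteq> mInfP \<Longrightarrow>
    x = pInfM \<or> y = pInfM \<Longrightarrow> Lclass_p x y \<ge> 4"
  by (erule valid_cases; erule valid_cases) (auto simp: Lclass_p_def is_fin_def)

lemma cls_le3: "valid_entry x \<Longrightarrow> valid_entry y \<Longrightarrow> x \<noteq> pInfM \<Longrightarrow> y \<noteq> pInfM \<Longrightarrow> Lclass_p x y \<le> 3"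
  by (erule valid_cases; erule valid_cases) (auto simp: Lclass_p_def is_fin_def)

lemma cls_le2: "valid_entry x \<Longrightarrow> valid_entry y \<Longrightarrow> x = mInfP \<or> y = mInfP \<Longrightarrow> Lclass_p x y \<le> 2"
  by (erule valid_cases; erule valid_cases) (auto simp: Lclass_p_def is_fin_def)



lemma core:
  assumes e: "e \<ge> 0"
    and v: "valid_entry r1" "valid_entry r2" "valid_entry s1" "valid_entry s2" "valid_entry t1" "valid_entry t2"
    and h1: "shle e s1 r1" "shle e s2 r2" and h2: "shle e t1 s1" "shle e t2 s2"
    and le: "Lclass_p r2 r1 < Lclass_p t2 t1 \<or> (Lclass_p r2 r1 = Lclass_p t2 t1 \<and> dle (ell_p r2 r1) (ell_p t2 t1))"
  shows "(shle e r1 s1 \<and> shle e r2 s2) \<or> (shle e s1 t1 \<and> shle e s2 t2)"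
proof -
  have rf: "shle e d d" for d using shle_refl[OF e] .
  have pm1: "r1 = mInfP \<Longrightarrow> s1 = mInfP \<and> t1 = mInfP" using shle_to_mInf h1 h2 v by metis
  have pm2: "r2 = mInfP \<Longrightarrow> s2 = mInfP \<and> t2 = mInfP" using shle_to_mInf h1 h2 v by metis
  have pp1: "t1 = pInfM \<Longrightarrow> s1 = pInfM \<and> r1 = pInfM" using shle_from_pInf h1 h2 v by metis
  have pp2: "t2 = pInfM \<Longrightarrow> s2 = pInfM \<and> r2 = pInfM" using shle_from_pInf h1 h2 v by metis
  show ?thesis
  proof (cases "r1 = mInfP \<or> r2 = mInfP")
    case True
    show ?thesis
    proof (cases "r1 = mInfP \<and> r2 = mInfP")
      case True then show ?thesis using pm1 pm2 rf by auto
    next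
      case False
      show ?thesis
      proof (cases "r1 = mInfP")
        case True
        with False have r2: "r2 \<noteq> mInfP" by auto
        have t1: "t1 = mInfP" "s1 = mInfP" using pm1 True by auto
        have t2: "t2 \<noteq> mInfP" using le True t1 cls_m[OF v(2) r2] cls_mm by auto
        have "dle r2 t2" using le True t1 cls_m[OF v(2) r2] cls_m[OF v(6) t2] by auto
        then show ?thesis using oneD[OF e, of r2 t2 s2] True t1 rf by auto
      next
        case False
        with \<open>r1 = mInfP \<or> r2 = mInfP\<close> have r2: "r2 = mInfP" and r1: "r1 \<noteq> mInfP" by auto
        have t2: "t2 = mInfP" "s2 = mInfP" using pm2 r2 by auto
        have t1: "t1 \<noteq> mInfP" using le r2 t2 cls_m[OF v(1) r1] cls_mm by auto
        have "dle r1 t1" using le r2 t2 cls_m[OF v(1) r1] cls_m[OF v(5) t1] by auto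
        then show ?thesis using oneD[OF e, of r1 t1 s1] r2 t2 rf by auto
      qed
    qed
  next
    case False
    then have r1: "r1 \<noteq> mInfP" and r2: "r2 \<noteq> mInfP" by auto
    show ?thesis
    proof (cases "t1 = pInfM \<or> t2 = pInfM")
      case True
      show ?thesis
      proof (cases "t1 = pInfM \<and> t2 = pInfM")
        case True then show ?thesis using pp1 pp2 rf by auto
      next
        case False
        show ?thesis
        proof (cases "t1 = pInfM")
          case True
          with False have t2: "t2 \<noteq> pInfM" by auto
          have s1: "r1 = pInfM" "s1 = pInfM" using pp1 True by auto
          have "r2 \<noteq> pInfM"
          proof
            assume "r2 = pInfM"
            then have "Lclass_p r2 r1 = 5" using s1 cls_pp by simp
            moreover have "Lclass_p t2 t1 \<le> 4" by (rule valid_cases[OF v(6)]) (use True t2 cls_m[of pInfM] in \<open>auto simp: cls_p valid_entry_def\<close>)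
            ultimately show False using le by auto
          qed
          have "\<exists>a s. r2 = (Fin a, s)" by (rule valid_cases[OF v(2)]) (use r2 \<open>r2 \<noteq> pInfM\<close> in auto)
          then have "\<exists>a s. r2 = (Fin a, s)" by blast
          then obtain a s where r2f: "r2 = (Fin a, s)" by blast
          have "t2 \<noteq> mInfP"
          proof
            assume "t2 = mInfP"
            then have "Lclass_p t2 t1 = 2" using True cls_m[of pInfM] by (simp add: valid_entry_def)
            moreover have "Lclass_p r2 r1 = 4" using cls_p[OF r2f] s1 by simp
            ultimately show False using le by auto
          qed
          have "\<exists>b t. t2 = (Fin b, t)" by (rule valid_cases[OF v(6)]) (use t2 \<open>t2 \<noteq> mInfP\<close> in auto)
          then have "\<exists>b t. t2 = (Fin b, t)" by blast
          then obtain b t where t2f: "t2 = (Fin b, t)" by blast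
          have "dle r2 t2" using le True s1 cls_p[OF r2f] cls_p[OF t2f] by auto
          then show ?thesis using oneD[OF e, of r2 t2 s2] True s1 rf by auto
        next
          case False
          with \<open>t1 = pInfM \<or> t2 = pInfM\<close> have t2: "t2 = pInfM" and t1: "t1 \<noteq> pInfM" by auto
          have s2: "r2 = pInfM" "s2 = pInfM" using pp2 t2 by auto
          have "r1 \<noteq> pInfM"
          proof
            assume "r1 = pInfM"
            then have "Lclass_p r2 r1 = 5" using s2 cls_pp by simp
            moreover have "Lclass_p t2 t1 \<le> 4" by (rule valid_cases[OF v(5)]) (use t2 t1 cls_m[of pInfM] in \<open>auto simp: cls_p valid_entry_def\<close>)
            ultimately show False using le by auto
          qed
          have "\<exists>a s. r1 = (Fin a, s)" by (rule valid_cases[OF v(1)]) (use r1 \<open>r1 \<noteq> pInfM\<close> in auto)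
          then have "\<exists>a s. r1 = (Fin a, s)" by blast
          then obtain a s where r1f: "r1 = (Fin a, s)" by blast
          have "t1 \<noteq> mInfP"
          proof
            assume "t1 = mInfP"
            then have "Lclass_p t2 t1 = 2" using t2 cls_m[of pInfM] by (simp add: valid_entry_def)
            moreover have "Lclass_p r2 r1 = 4" using cls_p[OF r1f] s2 by simp
            ultimately show False using le by auto
          qed
          have "\<exists>b t. t1 = (Fin b, t)" by (rule valid_cases[OF v(5)]) (use t1 \<open>t1 \<noteq> mInfP\<close> in auto)
          then have "\<exists>b t. t1 = (Fin b, t)" by blast
          then obtain b t where t1f: "t1 = (Fin b, t)" by blast
          have "dle r1 t1" using le t2 s2 cls_p[OF r1f] cls_p[OF t1f] by auto
          then show ?thesis using oneD[OF e, of r1 t1 s1] t2 s2 rf by auto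
        qed
      qed
    next
      case False
      then have t1: "t1 \<noteq> pInfM" and t2: "t2 \<noteq> pInfM" by auto
      have "r1 \<noteq> pInfM \<and> r2 \<noteq> pInfM"
      proof (rule ccontr)
        assume "\<not> ?thesis"
        then have "Lclass_p r2 r1 \<ge> 4" using cls_ge4[OF v(2) v(1) r2 r1] by auto
        moreover have "Lclass_p t2 t1 \<le> 3" using cls_le3[OF v(6) v(5) t2 t1] .
        ultimately show False using le by auto
      qed
      moreover have "t1 \<noteq> mInfP \<and> t2 \<noteq> mInfP"
      proof (rule ccontr)
        assume "\<not> ?thesis"
        then have "Lclass_p t2 t1 \<le> 2" using cls_le2[OF v(6) v(5)] by auto
        moreover have "Lclass_p r2 r1 \<ge> 3" using cls_ge3[OF v(2) v(1) r2 r1] .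
        ultimately show False using le by auto
      qed
      ultimately have nn: "r1 \<noteq> pInfM" "r2 \<noteq> pInfM" "t1 \<noteq> mInfP" "t2 \<noteq> mInfP" by auto
      have "s1 \<noteq> mInfP" "s2 \<noteq> mInfP" using shle_to_mInf h2 v nn by metis+
      moreover have "s1 \<noteq> pInfM" "s2 \<noteq> pInfM" using shle_from_pInf h1 v nn by metis+
      ultimately have "\<exists>x1 a1 x2 a2 y1 b1 y2 b2 z1 c1 z2 c2.
           r1 = (Fin x1, a1) \<and> r2 = (Fin x2, a2) \<and> s1 = (Fin y1, b1) \<and> s2 = (Fin y2, b2) \<and>
           t1 = (Fin z1, c1) \<and> t2 = (Fin z2, c2)"
        using v r1 r2 t1 t2 nn unfolding valid_entry_def is_fin_def by (metis prod.collapse)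
      then obtain x1 a1 x2 a2 y1 b1 y2 b2 z1 c1 z2 c2 where
        f: "r1 = (Fin x1, a1)" "r2 = (Fin x2, a2)" "s1 = (Fin y1, b1)" "s2 = (Fin y2, b2)"
           "t1 = (Fin z1, c1)" "t2 = (Fin z2, c2)"
        by blast
      have "dle (dadd r2 r1) (dadd t2 t1)" using le cls_f[OF f(2) f(1)] cls_f[OF f(6) f(5)] by auto
      then show ?thesis using core3[OF e, of y1 b1 x1 a1 y2 b2 x2 a2 z1 c1 z2 c2] h1 h2 f by simp
    qed
  qed
qed



lemma cond_iff:
  "(\<forall>b. shift e b \<in> Lset b2 b1 \<longrightarrow> b \<in> Lset a2 a1) \<longleftrightarrow> shle e b1 a1 \<and> shle e b2 a2"
proof
  assume h: "\<forall>b. shift e b \<in> Lset b2 b1 \<longrightarrow> b \<in> Lset a2 a1"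
  show "shle e b1 a1 \<and> shle e b2 a2"
    unfolding shle_def using h[rule_format, of "Pt _ Br1"] h[rule_format, of "Pt _ Br2"] by auto
next
  assume "shle e b1 a1 \<and> shle e b2 a2"
  then show "\<forall>b. shift e b \<in> Lset b2 b1 \<longrightarrow> b \<in> Lset a2 a1"
    unfolding shle_def
  proof (intro allI impI)
    fix b assume h: "(\<forall>x. inD (x + e) b1 \<longrightarrow> inD x a1) \<and> (\<forall>x. inD (x + e) b2 \<longrightarrow> inD x a2)"
      "shift e b \<in> Lset b2 b1"
    then show "b \<in> Lset a2 a1"
    proof (cases b)
      case (Pt x i) then show ?thesis using h by (cases i) auto
    qed auto
  qed
qed

theorem lemma4p14:
  fixes R S T :: "bp set" and e :: real
  assumes "R \<in> Lfam" and "S \<in> Lfam" and "T \<in> Lfam"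
    and "le_ell R T" and "e \<ge> 0"
    and "\<exists>\<phi>. is_mor (imod R :: 'k::field pmod) (shiftmod e (imod S)) \<phi> \<and> nonzero_mor (imod R :: 'k pmod) \<phi>"
    and "\<exists>\<psi>. is_mor (imod S :: 'k pmod) (shiftmod e (imod T)) \<psi> \<and> nonzero_mor (imod S :: 'k pmod) \<psi>"
  shows "interleaved e (imod S :: 'k pmod) (imod R) \<or> interleaved e (imod S :: 'k pmod) (imod T)"
proof -
  obtain r2 r1 where r: "valid_entry r2" "valid_entry r1" "R = Lset r2 r1" using Lfam_repr[OF assms(1)] by blast
  obtain s2 s1 where s: "valid_entry s2" "valid_entry s1" "S = Lset s2 s1" using Lfam_repr[OF assms(2)] by blast
  obtain t2 t1 where t: "valid_entry t2" "valid_entry t1" "T = Lset t2 t1" using Lfam_repr[OF assms(3)] by blast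
  have NR: "NInf \<in> R" and NS: "NInf \<in> S" and NT: "NInf \<in> T" using assms(1-3) by (auto simp: Lfam_def)
  obtain \<phi> where \<phi>: "is_mor (imod R :: 'k::field pmod) (shiftmod e (imod S)) \<phi>" "nonzero_mor (imod R :: 'k pmod) \<phi>"
    using assms(6) by blast
  obtain \<psi> where \<psi>: "is_mor (imod S :: 'k::field pmod) (shiftmod e (imod T)) \<psi>" "nonzero_mor (imod S :: 'k pmod) \<psi>"
    using assms(7) by blast
  have RS: "\<forall>b. shift e b \<in> S \<longrightarrow> b \<in> R" using mor_incl[OF \<phi> NR NS] by blast
  have ST: "\<forall>b. shift e b \<in> T \<longrightarrow> b \<in> S" using mor_incl[OF \<psi> NS NT] by blast
  have h1: "shle e s1 r1" "shle e s2 r2" using RS cond_iff r s by metis+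
  have h2: "shle e t1 s1" "shle e t2 s2" using ST cond_iff s t by metis+
  have le: "Lclass_p r2 r1 < Lclass_p t2 t1 \<or> (Lclass_p r2 r1 = Lclass_p t2 t1 \<and> dle (ell_p r2 r1) (ell_p t2 t1))"
    using assms(4) r t by (simp add: le_ell_def Lclass_def ell_def Lparams_eq)
  have "(shle e r1 s1 \<and> shle e r2 s2) \<or> (shle e s1 t1 \<and> shle e s2 t2)"
    by (rule core[OF assms(5) r(2) r(1) s(2) s(1) t(2) t(1) h1 h2 le])
  then show ?thesis
  proof
    assume "shle e r1 s1 \<and> shle e r2 s2"
    then have "\<forall>b. shift e b \<in> R \<longrightarrow> b \<in> S" using cond_iff r s by metis
    then show ?thesis using interleave_build[OF assms(2) assms(1)] RS by blast
  next
    assume "shle e s1 t1 \<and> shle e s2 t2"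
    then have "\<forall>b. shift e b \<in> S \<longrightarrow> b \<in> T" using cond_iff s t by metis
    then show ?thesis using interleave_build[OF assms(2) assms(3)] ST by blast
  qed
qed

end
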